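(* Let $G$ be a finite simple graph with a perfect matching $M$ and let $\mathcal{C}$ be an optimal edge $2$-colouring of $G$. Let $\mathcal{C}_M$ be the set of colours used on edges of $M$. For each $j\in\mathcal{C}_M$ let $S_j\subseteq V(G)$ be an $M$-monochromatic set such that the edges of $M$ incident with vertices of $S_j$ are coloured $j$. Then $$|\mathcal{C}_M|\le |M|-\sum_{j\in\mathcal{C}_M}\mathrm{rp}(S_j).$$
   Context: An edge $2$-colouring assigns colours to edges (not necessarily properly) so that each vertex sees at most $2$ distinct colours; optimal means it uses the maximum number of colours. A set $S\subseteq V(G)$ is $M$-monochromatic if all edges of $M$ incident with vertices of $S$ have the same colour. $i(S;M)$ denotes the number of edges of $M$ incident with a vertex of $S$, and the repetition content of an $M$-monochromatic set $S$ is $\mathrm{rp}(S):=i(S;M)-1$. *)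

theory Defs
  imports Main
begin

definition simple_graph :: "'a set \<Rightarrow> 'a set set \<Rightarrow> bool" where
  "simple_graph V E \<longleftrightarrow> finite V \<and>
     (\<forall>e\<in>E. \<exists>u v. e = {u, v} \<and> u \<noteq> v \<and> u \<in> V \<and> v \<in> V)"

definition perfect_matching :: "'a set \<Rightarrow> 'a set set \<Rightarrow> 'a set set \<Rightarrow> bool" where
  "perfect_matching V E M \<longleftrightarrow> M \<subseteq> E \<and> (\<forall>v\<in>V. \<exists>!e. e \<in> M \<and> v \<in> e)"

definition edge_2_colouring :: "'a set \<Rightarrow> 'a set set \<Rightarrow> ('a set \<Rightarrow> 'c) \<Rightarrow> bool" where
  "edge_2_colouring V E c \<longleftrightarrow> (\<forall>v\<in>V. card (c ` {e \<in> E. v \<in> e}) \<le> 2)"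

text \<open>Optimal: uses the maximum number of colours over all edge 2-colourings
  (competitors use natural-number colours, which loses no generality since E is finite).\<close>
definition optimal_edge_2_colouring :: "'a set \<Rightarrow> 'a set set \<Rightarrow> ('a set \<Rightarrow> 'c) \<Rightarrow> bool" where
  "optimal_edge_2_colouring V E c \<longleftrightarrow> edge_2_colouring V E c \<and>
     (\<forall>c' :: 'a set \<Rightarrow> nat. edge_2_colouring V E c' \<longrightarrow> card (c' ` E) \<le> card (c ` E))"

definition inc :: "'a set \<Rightarrow> 'a set set \<Rightarrow> nat" where
  "inc S M = card {e \<in> M. e \<inter> S \<noteq> {}}"

definition M_mono_col :: "'a set set \<Rightarrow> ('a set \<Rightarrow> 'c) \<Rightarrow> 'c \<Rightarrow> 'a set \<Rightarrow> bool" where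
  "M_mono_col M c j S \<longleftrightarrow> (\<forall>e\<in>M. e \<inter> S \<noteq> {} \<longrightarrow> c e = j)"

definition rp :: "'a set set \<Rightarrow> 'a set \<Rightarrow> int" where
  "rp M S = int (inc S M) - 1"

end

theory Submission
  imports Defs
begin

theorem lemma7:
  fixes V :: "'a set" and E M :: "'a set set" and c :: "'a set \<Rightarrow> 'c"
    and S :: "'c \<Rightarrow> 'a set"
  assumes "simple_graph V E"
    and "perfect_matching V E M"
    and "optimal_edge_2_colouring V E c"
    and "\<forall>j\<in>c ` M. S j \<subseteq> V \<and> M_mono_col M c j (S j)"
  shows "int (card (c ` M)) \<le> int (card M) - (\<Sum>j\<in>c ` M. rp M (S j))"
proof -
  have fV: "finite V" using assms(1) by (simp add: simple_graph_def)
  have "E \<subseteq> Pow V" using assms(1) by (auto simp: simple_graph_def)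
  hence fE: "finite E" using fV using finite_subset by blast
  have fM: "finite M" using assms(2) fE unfolding perfect_matching_def using finite_subset by blast
  define A where "A j = {e \<in> M. e \<inter> S j \<noteq> {}}" for j
  have fA: "\<forall>j\<in>c ` M. finite (A j)" using fM by (simp add: A_def)
  have disj: "\<forall>i\<in>c ` M. \<forall>j\<in>c ` M. i \<noteq> j \<longrightarrow> A i \<inter> A j = {}"
  proof (intro ballI impI)
    fix i j assume i: "i \<in> c ` M" and j: "j \<in> c ` M" and ij: "i \<noteq> j"
    show "A i \<inter> A j = {}"
    proof (rule ccontr)
      assume "A i \<inter> A j \<noteq> {}"
      then obtain e where "e \<in> M" "e \<inter> S i \<noteq> {}" "e \<inter> S j \<noteq> {}" by (auto simp: A_def)
      moreover have "M_mono_col M c i (S i)" "M_mono_col M c j (S j)" using assms(4) i j by auto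
      ultimately have "c e = i" "c e = j" unfolding M_mono_col_def by blast+
      thus False using ij by simp
    qed
  qed
  have "(\<Sum>j\<in>c ` M. card (A j)) = card (\<Union>j\<in>c ` M. A j)"
    using card_UN_disjoint[OF _ fA disj] fM by simp
  also have "\<dots> \<le> card M" using fM by (intro card_mono) (auto simp: A_def)
  finally have le: "(\<Sum>j\<in>c ` M. card (A j)) \<le> card M" .
  have "(\<Sum>j\<in>c ` M. rp M (S j)) = (\<Sum>j\<in>c ` M. int (card (A j))) - int (card (c ` M))"
    by (simp add: rp_def inc_def A_def sum_subtractf)
  also have "(\<Sum>j\<in>c ` M. int (card (A j))) = int (\<Sum>j\<in>c ` M. card (A j))" by simp
  finally show ?thesis using le by linarith
qed

end
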